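(* Consider the upper half-space model $\mathbb{H}^3=\{(x_1,x_2,x_3)\in\mathbb{R}^3: x_3>0\}$ with metric $g=\frac{1}{x_3^2}(dx_1^2+dx_2^2+dx_3^2)$. Let $E$ be a complete end of revolution in $\mathbb{H}^3$ about the $x_3$-axis, and suppose there is $z>0$ such that $E$ is contained on the horosphere $\{x_3=z\}$, i.e. $E\subset\{x\in\mathbb{H}^3: x_3\ge z\}$. Then $E$ is parabolic.
   Context: A complete end of revolution about the $x_3$-axis is the set $E=\{(\gamma_1(s)\cos\theta,\gamma_1(s)\sin\theta,\gamma_2(s)): s\ge0,\ \theta\in[0,2\pi)\}$, where $\gamma(s)=(\gamma_1(s),0,\gamma_2(s))$, $s\in[0,\infty)$, is a smooth regular curve with $\gamma_1>0$, $\gamma_2>0$ and infinite hyperbolic length; $E$ carries the metric induced by this immersion of $[0,\infty)\times\mathbb{S}^1$. An end $E$ is parabolic if every bounded harmonic function on $E$ is determined by its boundary values. *)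

theory Defs
  imports "HOL-Analysis.Analysis"
begin

definition smooth_on :: "real set \<Rightarrow> (real \<Rightarrow> real) \<Rightarrow> bool" where
  "smooth_on U f \<longleftrightarrow> open U \<and> (\<forall>n. \<forall>x\<in>U. ((deriv ^^ n) f) differentiable (at x))"

text \<open>Generating curve gamma(s) = (g1 s, 0, g2 s), s in [0,oo): smooth (on an open
  neighbourhood of [0,oo)), regular, with g1 > 0, g2 > 0, and infinite hyperbolic length.\<close>
definition hyp_length :: "(real \<Rightarrow> real) \<Rightarrow> (real \<Rightarrow> real) \<Rightarrow> real \<Rightarrow> real" where
  "hyp_length g1 g2 T =
     integral {0..T} (\<lambda>s. sqrt ((deriv g1 s)\<^sup>2 + (deriv g2 s)\<^sup>2) / g2 s)"

definition complete_end_of_revolution :: "(real \<Rightarrow> real) \<Rightarrow> (real \<Rightarrow> real) \<Rightarrow> bool" where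
  "complete_end_of_revolution g1 g2 \<longleftrightarrow>
     (\<exists>U. {0..} \<subseteq> U \<and> smooth_on U g1 \<and> smooth_on U g2) \<and>
     (\<forall>s\<ge>0. (deriv g1 s)\<^sup>2 + (deriv g2 s)\<^sup>2 > 0) \<and>
     (\<forall>s\<ge>0. g1 s > 0 \<and> g2 s > 0) \<and>
     filterlim (hyp_length g1 g2) at_top at_top"

text \<open>Induced metric of the immersion (s,theta) |-> (g1 s cos theta, g1 s sin theta, g2 s)
  into the upper half-space with metric (dx1^2+dx2^2+dx3^2)/x3^2; it is diagonal:
  g_ss = |gamma'|^2 / g2^2,  g_tt = g1^2 / g2^2,  g_st = 0.\<close>
definition g_ss :: "(real \<Rightarrow> real) \<Rightarrow> (real \<Rightarrow> real) \<Rightarrow> real \<Rightarrow> real" where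
  "g_ss g1 g2 s = ((deriv g1 s)\<^sup>2 + (deriv g2 s)\<^sup>2) / (g2 s)\<^sup>2"

definition g_tt :: "(real \<Rightarrow> real) \<Rightarrow> (real \<Rightarrow> real) \<Rightarrow> real \<Rightarrow> real" where
  "g_tt g1 g2 s = (g1 s)\<^sup>2 / (g2 s)\<^sup>2"

definition pd1 :: "(real \<times> real \<Rightarrow> real) \<Rightarrow> real \<times> real \<Rightarrow> real" where
  "pd1 u = (\<lambda>(s,t). deriv (\<lambda>r. u (r,t)) s)"

definition pd2 :: "(real \<times> real \<Rightarrow> real) \<Rightarrow> real \<times> real \<Rightarrow> real" where
  "pd2 u = (\<lambda>(s,t). deriv (\<lambda>r. u (s,r)) t)"

definition C2_on :: "(real \<times> real) set \<Rightarrow> (real \<times> real \<Rightarrow> real) \<Rightarrow> bool" where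
  "C2_on U u \<longleftrightarrow> open U \<and>
     (\<forall>p\<in>U. u differentiable (at p) \<and> pd1 u differentiable (at p) \<and> pd2 u differentiable (at p)) \<and>
     continuous_on U (pd1 (pd1 u)) \<and> continuous_on U (pd1 (pd2 u)) \<and>
     continuous_on U (pd2 (pd1 u)) \<and> continuous_on U (pd2 (pd2 u))"

definition laplace_beltrami ::
  "(real \<Rightarrow> real) \<Rightarrow> (real \<Rightarrow> real) \<Rightarrow> (real \<times> real \<Rightarrow> real) \<Rightarrow> real \<times> real \<Rightarrow> real" where
  "laplace_beltrami g1 g2 u = (\<lambda>(s,t).
     (1 / sqrt (g_ss g1 g2 s * g_tt g1 g2 s)) *
       (pd1 (\<lambda>(r,q). sqrt (g_ss g1 g2 r * g_tt g1 g2 r) / g_ss g1 g2 r * pd1 u (r,q)) (s,t)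
      + pd2 (\<lambda>(r,q). sqrt (g_ss g1 g2 r * g_tt g1 g2 r) / g_tt g1 g2 r * pd2 u (r,q)) (s,t)))"

text \<open>A function on the end E = [0,oo) x S^1 (represented as a 2pi-periodic function in theta),
  continuous up to the boundary {s = 0}, C^2 and harmonic in the interior.\<close>
definition harmonic_on_end :: "(real \<Rightarrow> real) \<Rightarrow> (real \<Rightarrow> real) \<Rightarrow> (real \<times> real \<Rightarrow> real) \<Rightarrow> bool" where
  "harmonic_on_end g1 g2 u \<longleftrightarrow>
     (\<forall>s t. u (s, t + 2 * pi) = u (s, t)) \<and>
     continuous_on ({0..} \<times> UNIV) u \<and>
     C2_on ({0<..} \<times> UNIV) u \<and>
     (\<forall>s t. s > 0 \<longrightarrow> laplace_beltrami g1 g2 u (s,t) = 0)"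

definition parabolic_end :: "(real \<Rightarrow> real) \<Rightarrow> (real \<Rightarrow> real) \<Rightarrow> bool" where
  "parabolic_end g1 g2 \<longleftrightarrow>
     (\<forall>u v. harmonic_on_end g1 g2 u \<and> bounded (u ` ({0..} \<times> UNIV)) \<and>
            harmonic_on_end g1 g2 v \<and> bounded (v ` ({0..} \<times> UNIV)) \<and>
            (\<forall>t. u (0,t) = v (0,t)) \<longrightarrow>
            (\<forall>s t. s \<ge> 0 \<longrightarrow> u (s,t) = v (s,t)))"

end

theory Submission
  imports Defs
begin

lemma second_deriv_max:
  fixes \<phi> \<phi>' :: "real \<Rightarrow> real"
  assumes ax: "a < x" and xb: "x < b" and mx: "\<forall>y\<in>{a<..<b}. \<phi> y \<le> \<phi> x"
    and d1: "\<forall>y\<in>{a<..<b}. (\<phi> has_real_derivative \<phi>' y) (at y)"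
    and d2: "(\<phi>' has_real_derivative D) (at x)"
  shows "\<phi>' x = 0 \<and> D \<le> 0"
proof -
  have z: "\<phi>' x = 0"
  proof (rule DERIV_local_max[where d="min (x-a) (b-x)"])
    show "DERIV \<phi> x :> \<phi>' x" using d1 ax xb by auto
    show "0 < min (x - a) (b - x)" using ax xb by auto
    show "\<forall>y. \<bar>x - y\<bar> < min (x - a) (b - x) \<longrightarrow> \<phi> y \<le> \<phi> x"
      using mx by (auto simp: abs_if split: if_splits)
  qed
  moreover have "D \<le> 0"
  proof (rule ccontr)
    assume "\<not> D \<le> 0"
    then obtain d where d: "d > 0" "\<forall>h>0. h < d \<longrightarrow> \<phi>' x < \<phi>' (x+h)"
      using DERIV_pos_inc_right[OF d2] by auto
    define y where "y = x + min d (b-x) / 2"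
    have xy: "x < y" "y < b" "y - x < d" using d xb unfolding y_def by (auto simp: min_def field_simps)
    obtain \<xi> where \<xi>: "x < \<xi>" "\<xi> < y" "\<phi> y - \<phi> x = (y - x) * \<phi>' \<xi>"
      using MVT2[of x y \<phi> \<phi>'] xy d1 ax by force
    have "\<phi>' (x + (\<xi> - x)) > \<phi>' x" using d(2)[rule_format, of "\<xi> - x"] \<xi> xy by auto
    hence "\<phi>' \<xi> > 0" using z by simp
    hence "\<phi> y > \<phi> x" proof -
      have "(y - x) * \<phi>' \<xi> > 0" using \<open>\<phi>' \<xi> > 0\<close> \<xi> by simp
      thus ?thesis using \<xi>(3) by linarith
    qed
    moreover have "\<phi> y \<le> \<phi> x" using mx xy ax by auto
    ultimately show False by simp
  qed
  ultimately show ?thesis by simp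
qed

lemma part1:
  assumes "F differentiable (at (r,t))"
  shows "((\<lambda>x. F (x,t)) has_real_derivative pd1 F (r,t)) (at r)"
proof -
  have "(\<lambda>x. (x,t)) differentiable (at r)" by (auto intro!: derivative_intros simp: differentiable_def)
  hence "(F \<circ> (\<lambda>x. (x,t))) differentiable (at r)" using differentiable_chain_at assms by fastforce
  thus ?thesis unfolding pd1_def using DERIV_deriv_iff_real_differentiable by (simp add: o_def)
qed

lemma part2:
  assumes "F differentiable (at (r,t))"
  shows "((\<lambda>x. F (r,x)) has_real_derivative pd2 F (r,t)) (at t)"
proof -
  have "(\<lambda>x. (r,x)) differentiable (at t)" by (auto intro!: derivative_intros simp: differentiable_def)
  hence "(F \<circ> (\<lambda>x. (r,x))) differentiable (at t)" using differentiable_chain_at assms by fastforce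
  thus ?thesis unfolding pd2_def using DERIV_deriv_iff_real_differentiable by (simp add: o_def)
qed


definition PP :: "(real \<Rightarrow> real) \<Rightarrow> (real \<Rightarrow> real) \<Rightarrow> real \<Rightarrow> real" where
  "PP g1 g2 r = (deriv g1 r)\<^sup>2 + (deriv g2 r)\<^sup>2"
definition Bf where "Bf g1 g2 r = sqrt (PP g1 g2 r) / g1 r"
definition Af where "Af g1 g2 r = g1 r / sqrt (PP g1 g2 r)"
definition Hf where "Hf g1 g2 T = integral {0..T} (Bf g1 g2)"

lemma cer_basic:
  assumes "complete_end_of_revolution g1 g2" "x \<ge> 0"
  shows "(g1 has_real_derivative deriv g1 x) (at x)" "(g2 has_real_derivative deriv g2 x) (at x)"
    "deriv g1 differentiable (at x)" "deriv g2 differentiable (at x)"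
    "PP g1 g2 x > 0" "g1 x > 0" "g2 x > 0"
proof -
  obtain U where U: "{0..} \<subseteq> U" "smooth_on U g1" "smooth_on U g2"
    using assms(1) unfolding complete_end_of_revolution_def by auto
  have xU: "x \<in> U" using U assms by auto
  have "((deriv ^^ 0) g1) differentiable (at x)" "((deriv ^^ 1) g1) differentiable (at x)"
    "((deriv ^^ 0) g2) differentiable (at x)" "((deriv ^^ 1) g2) differentiable (at x)"
    using U(2,3) xU unfolding smooth_on_def by blast+
  thus "(g1 has_real_derivative deriv g1 x) (at x)" "(g2 has_real_derivative deriv g2 x) (at x)"
    "deriv g1 differentiable (at x)" "deriv g2 differentiable (at x)"
    by (auto simp: DERIV_deriv_iff_real_differentiable)
  show "PP g1 g2 x > 0" "g1 x > 0" "g2 x > 0"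
    using assms unfolding complete_end_of_revolution_def PP_def by auto
qed

lemma cer_cont:
  assumes "complete_end_of_revolution g1 g2" "x \<ge> 0"
  shows "isCont g1 x" "isCont g2 x" "isCont (deriv g1) x" "isCont (deriv g2) x"
  using cer_basic[OF assms] by (auto intro: DERIV_isCont differentiable_imp_continuous_within)

lemma Bf_cont:
  assumes "complete_end_of_revolution g1 g2"
  shows "continuous_on {0..} (Bf g1 g2)" "continuous_on {0..} (\<lambda>s. sqrt ((deriv g1 s)\<^sup>2 + (deriv g2 s)\<^sup>2) / g2 s)"
proof -
  have "\<forall>x\<in>{0..}. isCont (Bf g1 g2) x"
  proof
    fix x :: real assume "x \<in> {0..}"
    hence x: "x \<ge> 0" by auto
    show "isCont (Bf g1 g2) x" unfolding Bf_def PP_def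
      using cer_cont[OF assms x] cer_basic[OF assms x] by (auto intro!: continuous_intros)
  qed
  thus "continuous_on {0..} (Bf g1 g2)" by (simp add: continuous_at_imp_continuous_on)
  have "\<forall>x\<in>{0..}. isCont (\<lambda>s. sqrt ((deriv g1 s)\<^sup>2 + (deriv g2 s)\<^sup>2) / g2 s) x"
  proof
    fix x :: real assume "x \<in> {0..}"
    hence x: "x \<ge> 0" by auto
    show "isCont (\<lambda>s. sqrt ((deriv g1 s)\<^sup>2 + (deriv g2 s)\<^sup>2) / g2 s) x"
      using cer_cont[OF assms x] cer_basic[OF assms x] by (auto intro!: continuous_intros)
  qed
  thus "continuous_on {0..} (\<lambda>s. sqrt ((deriv g1 s)\<^sup>2 + (deriv g2 s)\<^sup>2) / g2 s)"
    by (simp add: continuous_at_imp_continuous_on)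
qed

lemma Bf_Af_diff:
  assumes "complete_end_of_revolution g1 g2" "x \<ge> 0"
  shows "\<exists>D. (Bf g1 g2 has_real_derivative D) (at x)" "\<exists>D. (Af g1 g2 has_real_derivative D) (at x)"
proof -
  note b = cer_basic[OF assms]
  obtain D1 D2 where D: "(deriv g1 has_real_derivative D1) (at x)" "(deriv g2 has_real_derivative D2) (at x)"
    using b(3,4) by (auto simp: real_differentiable_def)
  have P: "(PP g1 g2 has_real_derivative (2*deriv g1 x*D1 + 2*deriv g2 x*D2)) (at x)"
    unfolding PP_def using D by (auto intro!: derivative_eq_intros)
  have S: "((\<lambda>r. sqrt (PP g1 g2 r)) has_real_derivative (inverse (sqrt (PP g1 g2 x)) / 2 * (2*deriv g1 x*D1 + 2*deriv g2 x*D2))) (at x)"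
    using DERIV_chain2[OF DERIV_real_sqrt[OF b(5)] P] .
  have s0: "sqrt (PP g1 g2 x) \<noteq> 0" using b(5) by simp
  show "\<exists>D. (Bf g1 g2 has_real_derivative D) (at x)" unfolding Bf_def
    using DERIV_divide[OF S b(1)] b(6) by auto
  show "\<exists>D. (Af g1 g2 has_real_derivative D) (at x)" unfolding Af_def
    using DERIV_divide[OF b(1) S] s0 by auto
qed

lemma int_deriv:
  fixes f :: "real \<Rightarrow> real"
  assumes "continuous_on {0..} f" "x > 0"
  shows "((\<lambda>T. integral {0..T} f) has_real_derivative f x) (at x)"
proof -
  have "continuous_on {0..x+1} f" using assms(1) by (rule continuous_on_subset) auto
  moreover have xin: "x \<in> {0..x+1}" using assms by auto
  ultimately have "((\<lambda>T. integral {0..T} f) has_real_derivative f x) (at x within {0..x+1})"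
    by (rule integral_has_real_derivative)
  moreover have "x \<in> interior {0..x+1}" using assms by auto
  hence "at x within {0..x+1} = at x" by (rule at_within_interior)
  ultimately show ?thesis by simp
qed

lemma int_cont:
  fixes f :: "real \<Rightarrow> real"
  assumes "continuous_on {0..} f"
  shows "continuous_on {0..b} (\<lambda>T. integral {0..T} f)"
proof -
  have "continuous_on {0..b} f" using assms(1) by (rule continuous_on_subset) auto
  thus ?thesis by (intro indefinite_integral_continuous_1 integrable_continuous_real)
qed

lemma Bf_pos: assumes "complete_end_of_revolution g1 g2" "x \<ge> 0" shows "Bf g1 g2 x > 0"
  using cer_basic[OF assms] unfolding Bf_def by auto

lemma Hf_mono:
  assumes cer: "complete_end_of_revolution g1 g2" and "0 \<le> a" "a \<le> b"
  shows "Hf g1 g2 a \<le> Hf g1 g2 b"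
  unfolding Hf_def
proof (rule DERIV_nonneg_imp_increasing_open[OF assms(3)])
  fix x assume x: "a < x" "x < b"
  show "\<exists>y. ((\<lambda>T. integral {0..T} (Bf g1 g2)) has_real_derivative y) (at x) \<and> 0 \<le> y"
    using int_deriv[OF Bf_cont(1)[OF cer], of x] Bf_pos[OF cer, of x] x assms by (auto intro!: exI)
next
  show "continuous_on {a..b} (\<lambda>T. integral {0..T} (Bf g1 g2))"
    using int_cont[OF Bf_cont(1)[OF cer], of b] by (rule continuous_on_subset) (use assms in auto)
qed

lemma Hf_0: "Hf g1 g2 0 = 0" unfolding Hf_def by simp


lemma Hf_unbounded:
  assumes cer: "complete_end_of_revolution g1 g2" and z: "z > 0" and gz: "\<forall>s\<ge>0. g2 s \<ge> z"
  shows "\<exists>S\<ge>0. Hf g1 g2 S > M"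
proof (cases "\<exists>K. \<forall>s\<ge>0. g1 s \<le> K")
  case True
  then obtain K where K: "\<forall>s\<ge>0. g1 s \<le> K" by auto
  have K0: "K > 0" using K[rule_format, of 0] cer_basic(6)[OF cer, of 0] by auto
  define c where "c = z / K"
  have c0: "c > 0" using z K0 by (simp add: c_def)
  have comp: "Hf g1 g2 T \<ge> c * hyp_length g1 g2 T" if T: "T \<ge> 0" for T
  proof -
    have "(\<lambda>T. Hf g1 g2 T - c * hyp_length g1 g2 T) 0 \<le> (\<lambda>T. Hf g1 g2 T - c * hyp_length g1 g2 T) T"
      unfolding Hf_def hyp_length_def
    proof (rule DERIV_nonneg_imp_increasing_open[OF T])
      fix x :: real assume x: "0 < x" "x < T"
      have x0: "x \<ge> 0" using x by simp
      note b = cer_basic[OF cer x0]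
      have "c * (sqrt ((deriv g1 x)\<^sup>2 + (deriv g2 x)\<^sup>2) / g2 x) \<le> Bf g1 g2 x"
      proof -
        define q where "q = sqrt ((deriv g1 x)\<^sup>2 + (deriv g2 x)\<^sup>2)"
        have q0: "q \<ge> 0" unfolding q_def by simp
        have "c * (q / g2 x) \<le> c * (q / z)"
          using gz x0 z c0 q0 by (intro mult_left_mono divide_left_mono) auto
        also have "\<dots> = q / K" using z K0 by (simp add: c_def)
        also have "\<dots> \<le> q / g1 x" using K x0 b(6) q0 by (intro divide_left_mono) auto
        finally show ?thesis unfolding Bf_def PP_def q_def .
      qed
      moreover have "((\<lambda>T. integral {0..T} (Bf g1 g2) - c * integral {0..T} (\<lambda>s. sqrt ((deriv g1 s)\<^sup>2 + (deriv g2 s)\<^sup>2) / g2 s)) has_real_derivative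
         (Bf g1 g2 x - c * (sqrt ((deriv g1 x)\<^sup>2 + (deriv g2 x)\<^sup>2) / g2 x))) (at x)"
        using int_deriv[OF Bf_cont(1)[OF cer] x(1)] int_deriv[OF Bf_cont(2)[OF cer] x(1)]
        by (intro DERIV_diff DERIV_cmult)
      ultimately show "\<exists>y. ((\<lambda>T. integral {0..T} (Bf g1 g2) - c * integral {0..T} (\<lambda>s. sqrt ((deriv g1 s)\<^sup>2 + (deriv g2 s)\<^sup>2) / g2 s)) has_real_derivative y) (at x) \<and> 0 \<le> y"
        by (intro exI[of _ "Bf g1 g2 x - c * (sqrt ((deriv g1 x)\<^sup>2 + (deriv g2 x)\<^sup>2) / g2 x)"]) auto
    next
      show "continuous_on {0..T} (\<lambda>T. integral {0..T} (Bf g1 g2) - c * integral {0..T} (\<lambda>s. sqrt ((deriv g1 s)\<^sup>2 + (deriv g2 s)\<^sup>2) / g2 s))"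
        using int_cont[OF Bf_cont(1)[OF cer]] int_cont[OF Bf_cont(2)[OF cer]]
        by (intro continuous_intros) auto
    qed
    thus ?thesis by (simp add: Hf_def hyp_length_def)
  qed
  have "filterlim (hyp_length g1 g2) at_top at_top" using cer unfolding complete_end_of_revolution_def by auto
  hence "eventually (\<lambda>T. M / c + 1 \<le> hyp_length g1 g2 T) at_top" by (simp add: filterlim_at_top)
  then obtain N where N: "\<forall>T\<ge>N. M / c + 1 \<le> hyp_length g1 g2 T" by (auto simp: eventually_at_top_linorder)
  define T where "T = max N 0"
  have "M / c + 1 \<le> hyp_length g1 g2 T" using N by (simp add: T_def)
  hence "c * (M / c + 1) \<le> c * hyp_length g1 g2 T" using c0 by (intro mult_left_mono) auto
  moreover have "c * (M / c + 1) = M + c" using c0 by (simp add: field_simps)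
  ultimately have "M + c \<le> c * hyp_length g1 g2 T" by simp
  hence "Hf g1 g2 T > M" using comp[of T] c0 by (simp add: T_def)
  thus ?thesis by (intro exI[of _ T]) (simp add: T_def)
next
  case False
  then obtain s where s: "s \<ge> 0" "g1 s > exp (M + ln (g1 0))" by (auto simp: not_le)
  have comp: "Hf g1 g2 T - ln (g1 T) \<ge> Hf g1 g2 0 - ln (g1 0)" if T: "T \<ge> 0" for T
  proof -
    have "(\<lambda>T. Hf g1 g2 T - ln (g1 T)) 0 \<le> (\<lambda>T. Hf g1 g2 T - ln (g1 T)) T"
      unfolding Hf_def
    proof (rule DERIV_nonneg_imp_increasing_open[OF T])
      fix x :: real assume x: "0 < x" "x < T"
      have x0: "x \<ge> 0" using x by simp
      note b = cer_basic[OF cer x0]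
      have "deriv g1 x / g1 x \<le> Bf g1 g2 x"
        unfolding Bf_def PP_def using b(6) by (intro divide_right_mono) auto
      moreover have "((\<lambda>T. integral {0..T} (Bf g1 g2) - ln (g1 T)) has_real_derivative (Bf g1 g2 x - deriv g1 x / g1 x)) (at x)"
      proof -
        have "((\<lambda>x. ln (g1 x)) has_real_derivative (1/g1 x) * deriv g1 x) (at x)"
          using DERIV_chain2[OF DERIV_ln_divide[OF b(6)] b(1)] by (simp add: o_def)
        hence "((\<lambda>x. ln (g1 x)) has_real_derivative deriv g1 x / g1 x) (at x)" by simp
        thus ?thesis using int_deriv[OF Bf_cont(1)[OF cer] x(1)] by (rule DERIV_diff[rotated])
      qed
      ultimately show "\<exists>y. ((\<lambda>T. integral {0..T} (Bf g1 g2) - ln (g1 T)) has_real_derivative y) (at x) \<and> 0 \<le> y"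
        by (intro exI[of _ "Bf g1 g2 x - deriv g1 x / g1 x"]) auto
    next
      have "continuous_on {0..T} g1" using cer_cont(1)[OF cer] by (intro continuous_at_imp_continuous_on) auto
      moreover have "\<forall>x\<in>{0..T}. g1 x > 0" using cer_basic(6)[OF cer] by auto
      ultimately show "continuous_on {0..T} (\<lambda>T. integral {0..T} (Bf g1 g2) - ln (g1 T))"
        using int_cont[OF Bf_cont(1)[OF cer]]
        by (intro continuous_intros) (auto simp: continuous_on_subset)
    qed
    thus ?thesis by simp
  qed
  have "ln (g1 s) > M + ln (g1 0)" using s cer_basic(6)[OF cer, of 0]
  proof -
    have "exp (M + ln (g1 0)) < g1 s" by (rule s(2))
    hence "ln (exp (M + ln (g1 0))) < ln (g1 s)" by (subst ln_less_cancel_iff) (auto intro: less_trans[OF exp_gt_zero])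
    thus ?thesis by simp
  qed
  hence "Hf g1 g2 s > M" using comp[OF s(1)] by (simp add: Hf_0)
  thus ?thesis using s by auto
qed


lemma sqa: fixes p a b :: real assumes "p > 0" "a > 0" "b > 0"
  shows "sqrt (p / b\<^sup>2 * (a\<^sup>2 / b\<^sup>2)) = sqrt p * a / b\<^sup>2"
proof -
  have "p / b\<^sup>2 * (a\<^sup>2 / b\<^sup>2) = (sqrt p * a / b\<^sup>2)\<^sup>2"
    using assms by (simp add: power_divide power_mult_distrib)
  thus ?thesis using assms by simp
qed
lemma sqb: fixes p a b :: real assumes "p > 0" "a > 0" "b > 0"
  shows "sqrt p * a / b\<^sup>2 / (p / b\<^sup>2) = a / sqrt p"
proof -
  have "sqrt p * a / b\<^sup>2 / (p / b\<^sup>2) = sqrt p * a / p" using assms by simp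
  also have "\<dots> = a / sqrt p" using assms by (simp add: field_simps)
  finally show ?thesis .
qed
lemma sqc: fixes p a b :: real assumes "p > 0" "a > 0" "b > 0"
  shows "sqrt p * a / b\<^sup>2 / (a\<^sup>2 / b\<^sup>2) = sqrt p / a"
  using assms by (simp add: power2_eq_square)

lemma metric_alg:
  assumes cer: "complete_end_of_revolution g1 g2" and r: "r \<ge> 0"
  shows "sqrt (g_ss g1 g2 r * g_tt g1 g2 r) > 0"
    "sqrt (g_ss g1 g2 r * g_tt g1 g2 r) / g_ss g1 g2 r = Af g1 g2 r"
    "sqrt (g_ss g1 g2 r * g_tt g1 g2 r) / g_tt g1 g2 r = Bf g1 g2 r"
proof -
  note b = cer_basic[OF cer r]
  define P where "P = PP g1 g2 r"
  have P0: "P > 0" using b by (simp add: P_def)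
  have ss: "g_ss g1 g2 r = P / (g2 r)\<^sup>2" by (simp add: g_ss_def P_def PP_def)
  have tt: "g_tt g1 g2 r = (g1 r)\<^sup>2 / (g2 r)\<^sup>2" by (simp add: g_tt_def)
  have sq: "sqrt (g_ss g1 g2 r * g_tt g1 g2 r) = sqrt P * g1 r / (g2 r)\<^sup>2"
    unfolding ss tt using sqa[OF P0 b(6) b(7)] .
  show "sqrt (g_ss g1 g2 r * g_tt g1 g2 r) > 0" unfolding sq using P0 b by simp
  show "sqrt (g_ss g1 g2 r * g_tt g1 g2 r) / g_ss g1 g2 r = Af g1 g2 r"
    unfolding sq unfolding ss Af_def P_def[symmetric] using sqb[OF P0 b(6) b(7)] .
  show "sqrt (g_ss g1 g2 r * g_tt g1 g2 r) / g_tt g1 g2 r = Bf g1 g2 r"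
    unfolding sq unfolding tt Bf_def P_def[symmetric] using sqc[OF P0 b(6) b(7)] .
qed

lemma lap_expand:
  assumes cer: "complete_end_of_revolution g1 g2" and h: "harmonic_on_end g1 g2 u"
    and s: "s > 0" and A': "(Af g1 g2 has_real_derivative A') (at s)"
  shows "A' * pd1 u (s,t) + Af g1 g2 s * pd1 (pd1 u) (s,t) + Bf g1 g2 s * pd2 (pd2 u) (s,t) = 0"
proof -
  have C2: "C2_on ({0<..} \<times> UNIV) u" and L: "laplace_beltrami g1 g2 u (s,t) = 0"
    using h s unfolding harmonic_on_end_def by auto
  have dif: "u differentiable (at (r,q)) \<and> pd1 u differentiable (at (r,q)) \<and> pd2 u differentiable (at (r,q))"
    if "r > 0" for r q using C2 that unfolding C2_on_def by auto
  define alit where "alit r = sqrt (g_ss g1 g2 r * g_tt g1 g2 r) / g_ss g1 g2 r" for r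
  define blit where "blit r = sqrt (g_ss g1 g2 r * g_tt g1 g2 r) / g_tt g1 g2 r" for r
  have d11: "((\<lambda>r. pd1 u (r,t)) has_real_derivative pd1 (pd1 u) (s,t)) (at s)"
    using part1 dif s by blast
  have d22: "((\<lambda>q. pd2 u (s,q)) has_real_derivative pd2 (pd2 u) (s,t)) (at t)"
    using part2 dif s by blast
  have "((\<lambda>r. Af g1 g2 r * pd1 u (r,t)) has_real_derivative A' * pd1 u (s,t) + Af g1 g2 s * pd1 (pd1 u) (s,t)) (at s)"
    using DERIV_mult[OF A' d11] by (simp add: ac_simps)
  hence "((\<lambda>r. alit r * pd1 u (r,t)) has_real_derivative A' * pd1 u (s,t) + Af g1 g2 s * pd1 (pd1 u) (s,t)) (at s)"
    by (rule has_field_derivative_transform_within_open[where S="{0<..}"])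
       (use s metric_alg[OF cer] in \<open>auto simp: alit_def\<close>)
  hence X: "pd1 (\<lambda>(r,q). alit r * pd1 u (r,q)) (s,t) = A' * pd1 u (s,t) + Af g1 g2 s * pd1 (pd1 u) (s,t)"
    unfolding pd1_def by (simp add: DERIV_imp_deriv)
  have "((\<lambda>q. blit s * pd2 u (s,q)) has_real_derivative blit s * pd2 (pd2 u) (s,t)) (at t)"
    using DERIV_cmult[OF d22] .
  hence "deriv (\<lambda>q. blit s * pd2 u (s,q)) t = blit s * pd2 (pd2 u) (s,t)" by (rule DERIV_imp_deriv)
  moreover have "blit s = Bf g1 g2 s" using metric_alg(3)[OF cer, of s] s by (simp add: blit_def)
  moreover have "pd2 (\<lambda>(r,q). blit r * pd2 u (r,q)) (s,t) = deriv (\<lambda>q. blit s * pd2 u (s,q)) t"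
    by (simp add: pd2_def[of "\<lambda>(r,q). blit r * pd2 u (r,q)"])
  ultimately have Y: "pd2 (\<lambda>(r,q). blit r * pd2 u (r,q)) (s,t) = Bf g1 g2 s * pd2 (pd2 u) (s,t)" by simp
  have "laplace_beltrami g1 g2 u (s,t) = (1 / sqrt (g_ss g1 g2 s * g_tt g1 g2 s)) *
      (pd1 (\<lambda>(r,q). alit r * pd1 u (r,q)) (s,t) + pd2 (\<lambda>(r,q). blit r * pd2 u (r,q)) (s,t))"
    unfolding laplace_beltrami_def alit_def blit_def by simp
  hence "(1 / sqrt (g_ss g1 g2 s * g_tt g1 g2 s)) *
      (pd1 (\<lambda>(r,q). alit r * pd1 u (r,q)) (s,t) + pd2 (\<lambda>(r,q). blit r * pd2 u (r,q)) (s,t)) = 0"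
    using L by simp
  moreover have "1 / sqrt (g_ss g1 g2 s * g_tt g1 g2 s) \<noteq> 0" using metric_alg(1)[OF cer, of s] s by (metis divide_eq_0_iff less_irrefl zero_neq_one less_imp_le)
  ultimately have "pd1 (\<lambda>(r,q). alit r * pd1 u (r,q)) (s,t) + pd2 (\<lambda>(r,q). blit r * pd2 u (r,q)) (s,t) = 0"
    by (simp only: mult_eq_0_iff) simp
  thus ?thesis unfolding X Y .
qed


definition red :: "real \<Rightarrow> real" where "red t = t - 2*pi* of_int (floor (t/(2*pi)))"

lemma red_range: "red t \<in> {0..2*pi}"
proof -
  have p: "2*pi > 0" by simp
  have a: "of_int (floor (t/(2*pi))) \<le> t/(2*pi)" by (rule of_int_floor_le)
  have b: "t/(2*pi) < of_int (floor (t/(2*pi))) + 1" by (rule real_of_int_floor_add_one_gt)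
  have e: "2*pi*(t/(2*pi)) = t" by simp
  from mult_left_mono[OF a, of "2*pi"] p have "2*pi * of_int (floor (t/(2*pi))) \<le> 2*pi*(t/(2*pi))" by simp
  hence "2*pi * of_int (floor (t/(2*pi))) \<le> t" unfolding e .
  moreover from mult_strict_left_mono[OF b p] have "2*pi*(t/(2*pi)) < 2*pi*(of_int (floor (t/(2*pi))) + 1)" .
  hence "t < 2*pi * of_int (floor (t/(2*pi))) + 2*pi" unfolding e by (simp add: algebra_simps)
  ultimately show ?thesis unfolding red_def by auto
qed

lemma per_nat:
  assumes "\<forall>s t. u (s, t + 2*pi) = u (s,t)"
  shows "u (s, t + 2*pi*real n) = u (s,t)"
proof (induction n)
  case 0 then show ?case by simp
next
  case (Suc n)
  have "u (s, t + 2*pi*real (Suc n)) = u (s, (t + 2*pi*real n) + 2*pi)" by (simp add: algebra_simps)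
  also have "\<dots> = u (s, t + 2*pi*real n)" using assms by blast
  finally show ?case using Suc by simp
qed

lemma per_red:
  assumes "\<forall>s t. u (s, t + 2*pi) = u (s,t)"
  shows "u (s, t) = u (s, red t)"
proof (cases "floor (t/(2*pi)) \<ge> 0")
  case True
  define n where "n = nat (floor (t/(2*pi)))"
  have "real n = of_int (floor (t/(2*pi)))" using True by (simp add: n_def)
  hence "t = red t + 2*pi*real n" unfolding red_def by simp
  hence "u (s,t) = u (s, red t + 2*pi*real n)" by simp
  also have "\<dots> = u (s, red t)" by (rule per_nat[OF assms])
  finally show ?thesis .
next
  case False
  define n where "n = nat (- floor (t/(2*pi)))"
  have "real n = - of_int (floor (t/(2*pi)))"
  proof -
    have "0 \<le> - floor (t/(2*pi))" using False by linarith
    hence "real (nat (- floor (t/(2*pi)))) = of_int (- floor (t/(2*pi)))" by (rule of_nat_nat)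
    thus ?thesis by (simp add: n_def)
  qed
  hence "red t = t + 2*pi*real n" unfolding red_def by simp
  thus ?thesis using per_nat[OF assms, of s t n] by simp
qed

lemma bounded_diff_bound:
  assumes "bounded (u ` X)" "bounded (v ` X)"
  shows "\<exists>M\<ge>0. \<forall>x\<in>X. u x - v x \<le> (M::real)"
proof -
  obtain a where a: "\<forall>x\<in>X. \<bar>u x\<bar> \<le> a" using assms(1) by (auto simp: bounded_real)
  obtain b where b: "\<forall>x\<in>X. \<bar>v x\<bar> \<le> b" using assms(2) by (auto simp: bounded_real)
  show ?thesis
    by (rule exI[of _ "max 0 (a+b)"]) (use a b in \<open>force simp: abs_le_iff\<close>)
qed


lemma key:
  assumes cer: "complete_end_of_revolution g1 g2" and z: "z > 0" and gz: "\<forall>s\<ge>0. g2 s \<ge> z"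
    and hu: "harmonic_on_end g1 g2 u" and hv: "harmonic_on_end g1 g2 v"
    and M: "M \<ge> 0" "\<forall>x\<in>{0..} \<times> UNIV. u x - v x \<le> M"
    and bd: "\<forall>t. u (0,t) = v (0,t)"
    and e: "\<epsilon> > 0" and s1: "s1 \<ge> 0"
  shows "u (s1,t1) - v (s1,t1) \<le> \<epsilon> * Hf g1 g2 s1"
proof -
  let ?H = "Hf g1 g2"
  obtain S0 where S0: "S0 \<ge> 0" "?H S0 > (M+1)/\<epsilon>" using Hf_unbounded[OF cer z gz] by blast
  define S where "S = max S0 (s1+1)"
  have S: "S > s1" "S > 0" "S \<ge> S0" using s1 by (auto simp: S_def)
  have HS: "?H S > (M+1)/\<epsilon>" using Hf_mono[OF cer S0(1) S(3)] S0 by simp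
  have HS0: "?H S > 0" using HS M e by (smt (verit) divide_pos_pos)
  have eHS: "\<epsilon> * ?H S > M + 1" using HS e by (simp add: field_simps)
  define \<delta> where "\<delta> = 1 / (2 * (?H S)\<^sup>2)"
  have d0: "\<delta> > 0" using HS0 by (simp add: \<delta>_def)
  have dH: "\<delta> * (?H S)\<^sup>2 = 1/2" using HS0 by (simp add: \<delta>_def)
  define f where "f p = u p - v p - \<epsilon> * ?H (fst p) + \<delta> * (?H (fst p))\<^sup>2" for p
  define K where "K = {0..S} \<times> {0..2*pi}"
  have uper: "\<forall>s t. u (s, t + 2*pi) = u (s,t)" and vper: "\<forall>s t. v (s, t + 2*pi) = v (s,t)"
    using hu hv by (auto simp: harmonic_on_end_def)
  have uc: "continuous_on ({0..} \<times> UNIV) u" and vc: "continuous_on ({0..} \<times> UNIV) v"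
    using hu hv by (auto simp: harmonic_on_end_def)
  have Hc: "continuous_on {0..S} ?H" unfolding Hf_def by (rule int_cont[OF Bf_cont(1)[OF cer]])
  have Hcf: "continuous_on K (\<lambda>p. ?H (fst p))"
    by (rule continuous_on_compose2[OF Hc continuous_on_fst]) (auto simp: K_def)
  have KS: "K \<subseteq> {0..} \<times> UNIV" by (auto simp: K_def)
  have fc: "continuous_on K f" unfolding f_def
    using continuous_on_subset[OF uc KS] continuous_on_subset[OF vc KS] Hcf
    by (intro continuous_intros) auto
  have "compact K" unfolding K_def by (intro compact_Times compact_Icc)
  moreover have "K \<noteq> {}" using S by (auto simp: K_def)
  ultimately obtain p where pK: "p \<in> K" and pmax: "\<forall>y\<in>K. f y \<le> f p"
    using continuous_attains_sup[OF _ _ fc] by blast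
  have fred: "f (r,q) = f (r, red q)" for r q
    unfolding f_def using per_red[OF uper, of r q] per_red[OF vper, of r q] by simp
  have gmax: "f (r,q) \<le> f p" if "0 \<le> r" "r \<le> S" for r q
    using pmax[rule_format, of "(r, red q)"] red_range[of q] that fred[of r q] by (auto simp: K_def)
  have fp: "f p \<le> 0"
  proof (rule ccontr)
    assume fp0: "\<not> f p \<le> 0"
    obtain s0 t0 where p: "p = (s0,t0)" by (cases p)
    have s0r: "0 \<le> s0" "s0 \<le> S" using pK p by (auto simp: K_def)
    have "f (0,t0) = 0" unfolding f_def using bd by (simp add: Hf_0)
    hence s0n0: "s0 \<noteq> 0" using fp0 p by auto
    have "u (S,t0) - v (S,t0) \<le> M" using M(2) S by auto
    hence "f (S,t0) < 0" unfolding f_def using eHS dH by simp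
    hence s0nS: "s0 \<noteq> S" using fp0 p by auto
    have s0p: "0 < s0" "s0 < S" using s0r s0n0 s0nS by auto
    have s0nn: "s0 \<ge> 0" using s0p by simp
    obtain A' where A': "(Af g1 g2 has_real_derivative A') (at s0)" using Bf_Af_diff(2)[OF cer s0nn] by blast
    obtain B' where B': "(Bf g1 g2 has_real_derivative B') (at s0)" using Bf_Af_diff(1)[OF cer s0nn] by blast
    have Hd: "(?H has_real_derivative Bf g1 g2 r) (at r)" if "r > 0" for r
      unfolding Hf_def by (rule int_deriv[OF Bf_cont(1)[OF cer] that])
    have C2u: "C2_on ({0<..} \<times> UNIV) u" and C2v: "C2_on ({0<..} \<times> UNIV) v"
      using hu hv by (auto simp: harmonic_on_end_def)
    have difu: "u differentiable (at (r,q)) \<and> pd1 u differentiable (at (r,q)) \<and> pd2 u differentiable (at (r,q))"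
      if "r > 0" for r q using C2u that unfolding C2_on_def by auto
    have difv: "v differentiable (at (r,q)) \<and> pd1 v differentiable (at (r,q)) \<and> pd2 v differentiable (at (r,q))"
      if "r > 0" for r q using C2v that unfolding C2_on_def by auto
    define \<phi>' where "\<phi>' r = pd1 u (r,t0) - pd1 v (r,t0) - \<epsilon> * Bf g1 g2 r + \<delta> * (2 * ?H r * Bf g1 g2 r)" for r
    have phid: "((\<lambda>r. f (r,t0)) has_real_derivative \<phi>' r) (at r)" if "r > 0" for r
    proof -
      have "((\<lambda>r. u (r,t0) - v (r,t0) - \<epsilon> * ?H r + \<delta> * (?H r)\<^sup>2) has_real_derivative
          pd1 u (r,t0) - pd1 v (r,t0) - \<epsilon> * Bf g1 g2 r + \<delta> * (2 * ?H r * Bf g1 g2 r)) (at r)"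
      proof -
        have hsq: "((\<lambda>x. (?H x)^2) has_real_derivative 2 * ?H r * Bf g1 g2 r) (at r)"
          using DERIV_power[OF Hd[OF that], of 2] by (simp add: ac_simps)
        show ?thesis using part1[of u r t0] part1[of v r t0] difu[OF that] difv[OF that] Hd[OF that] hsq
          by (intro DERIV_add DERIV_diff DERIV_cmult) auto
      qed
      thus ?thesis unfolding f_def \<phi>'_def by simp
    qed
    have phi2: "(\<phi>' has_real_derivative
        pd1 (pd1 u) (s0,t0) - pd1 (pd1 v) (s0,t0) - \<epsilon> * B' + \<delta> * (2 * (Bf g1 g2 s0 * Bf g1 g2 s0 + ?H s0 * B'))) (at s0)"
    proof -
      have hb: "((\<lambda>x. 2 * ?H x * Bf g1 g2 x) has_real_derivative
          (2 * Bf g1 g2 s0) * Bf g1 g2 s0 + (2 * ?H s0) * B') (at s0)"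
        using DERIV_mult[OF DERIV_cmult[OF Hd[OF s0p(1)], of 2] B'] by (simp add: mult.commute)
      have "(\<phi>' has_real_derivative
        pd1 (pd1 u) (s0,t0) - pd1 (pd1 v) (s0,t0) - \<epsilon> * B' + \<delta> * ((2 * Bf g1 g2 s0) * Bf g1 g2 s0 + (2 * ?H s0) * B')) (at s0)"
        unfolding \<phi>'_def
        using part1[of "pd1 u" s0 t0] part1[of "pd1 v" s0 t0] difu[OF s0p(1)] difv[OF s0p(1)] hb B'
        by (intro DERIV_add DERIV_diff DERIV_cmult) auto
      thus ?thesis by (simp add: algebra_simps)
    qed
    have r1: "\<phi>' s0 = 0 \<and> pd1 (pd1 u) (s0,t0) - pd1 (pd1 v) (s0,t0) - \<epsilon> * B' + \<delta> * (2 * (Bf g1 g2 s0 * Bf g1 g2 s0 + ?H s0 * B')) \<le> 0"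
    proof (rule second_deriv_max[where a=0 and b=S and x=s0 and \<phi>'=\<phi>' and \<phi>="\<lambda>r. f (r,t0)"])
      show "0 < s0" "s0 < S" using s0p by auto
      show "\<forall>y\<in>{0<..<S}. f (y, t0) \<le> f (s0, t0)" using gmax p by auto
      show "\<forall>y\<in>{0<..<S}. ((\<lambda>r. f (r, t0)) has_real_derivative \<phi>' y) (at y)" using phid by auto
    qed (rule phi2)
    define \<psi>' where "\<psi>' q = pd2 u (s0,q) - pd2 v (s0,q)" for q
    have psid: "((\<lambda>q. f (s0,q)) has_real_derivative \<psi>' q) (at q)" for q
    proof -
      have "((\<lambda>q. u (s0,q) - v (s0,q) - \<epsilon> * ?H s0 + \<delta> * (?H s0)\<^sup>2) has_real_derivative
          pd2 u (s0,q) - pd2 v (s0,q) - 0 + 0) (at q)"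
        using part2[of u s0 q] part2[of v s0 q] difu[OF s0p(1)] difv[OF s0p(1)]
        by (intro DERIV_add DERIV_diff DERIV_const) auto
      thus ?thesis unfolding f_def \<psi>'_def by simp
    qed
    have psi2: "(\<psi>' has_real_derivative pd2 (pd2 u) (s0,t0) - pd2 (pd2 v) (s0,t0)) (at t0)"
      unfolding \<psi>'_def using part2[of "pd2 u" s0 t0] part2[of "pd2 v" s0 t0] difu[OF s0p(1)] difv[OF s0p(1)]
      by (intro DERIV_diff) auto
    have r2: "\<psi>' t0 = 0 \<and> pd2 (pd2 u) (s0,t0) - pd2 (pd2 v) (s0,t0) \<le> 0"
    proof (rule second_deriv_max[where a="t0-1" and b="t0+1" and x=t0 and \<phi>'=\<psi>' and \<phi>="\<lambda>q. f (s0,q)"])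
      show "t0 - 1 < t0" "t0 < t0 + 1" by auto
      show "\<forall>y\<in>{t0 - 1<..<t0 + 1}. f (s0, y) \<le> f (s0, t0)" using gmax s0r p by auto
      show "\<forall>y\<in>{t0 - 1<..<t0 + 1}. ((\<lambda>q. f (s0, q)) has_real_derivative \<psi>' y) (at y)" using psid by auto
    qed (rule psi2)
    have Lu: "A' * pd1 u (s0,t0) + Af g1 g2 s0 * pd1 (pd1 u) (s0,t0) + Bf g1 g2 s0 * pd2 (pd2 u) (s0,t0) = 0"
      by (rule lap_expand[OF cer hu s0p(1) A'])
    have Lv: "A' * pd1 v (s0,t0) + Af g1 g2 s0 * pd1 (pd1 v) (s0,t0) + Bf g1 g2 s0 * pd2 (pd2 v) (s0,t0) = 0"
      by (rule lap_expand[OF cer hv s0p(1) A'])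
    have AB1: "Af g1 g2 r * Bf g1 g2 r = 1" if "r \<ge> 0" for r
      using cer_basic[OF cer that] unfolding Af_def Bf_def by simp
    have "((\<lambda>r. Af g1 g2 r * Bf g1 g2 r) has_real_derivative A' * Bf g1 g2 s0 + Af g1 g2 s0 * B') (at s0)"
      using DERIV_mult[OF A' B'] by (simp add: ac_simps)
    moreover have "((\<lambda>r. Af g1 g2 r * Bf g1 g2 r) has_real_derivative 0) (at s0)"
      by (rule has_field_derivative_transform_within_open[OF DERIV_const[of 1], where S="{0<..}"])
         (use s0p AB1 in auto)
    ultimately have ABd: "A' * Bf g1 g2 s0 + Af g1 g2 s0 * B' = 0" by (rule DERIV_unique)
    define A where "A = Af g1 g2 s0"
    define B where "B = Bf g1 g2 s0"
    define H0 where "H0 = ?H s0"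
    define D11 where "D11 = pd1 (pd1 u) (s0,t0) - pd1 (pd1 v) (s0,t0)"
    define D1 where "D1 = pd1 u (s0,t0) - pd1 v (s0,t0)"
    define D22 where "D22 = pd2 (pd2 u) (s0,t0) - pd2 (pd2 v) (s0,t0)"
    have A0: "A > 0" and B0: "B > 0" using cer_basic[OF cer s0nn] by (auto simp: A_def B_def Af_def Bf_def)
    have ab: "A * B = 1" using AB1[OF s0nn] by (simp add: A_def B_def)
    have abd: "A * B' = - (A' * B)" using ABd by (simp add: A_def B_def)
    have eq1: "D1 = \<epsilon> * B - 2 * \<delta> * H0 * B" using r1 unfolding \<phi>'_def D1_def B_def H0_def by (simp add: algebra_simps)
    have ie1: "D11 \<le> \<epsilon> * B' - 2 * \<delta> * (B * B + H0 * B')" using r1 unfolding D11_def B_def H0_def by (simp add: algebra_simps)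
    have ie2: "D22 \<le> 0" using r2 unfolding D22_def by simp
    have L: "A' * D1 + A * D11 + B * D22 = 0" using Lu Lv unfolding A_def B_def D1_def D11_def D22_def by (simp add: algebra_simps)
    have t1: "A * D11 \<le> A * (\<epsilon> * B' - 2 * \<delta> * (B * B + H0 * B'))" using ie1 A0 by (intro mult_left_mono) auto
    have t2: "A * (\<epsilon> * B' - 2 * \<delta> * (B * B + H0 * B')) = \<epsilon> * (A * B') - 2 * \<delta> * (A * B) * B - 2 * \<delta> * H0 * (A * B')"
      by (simp add: algebra_simps)
    have t3: "B * D22 \<le> 0" using ie2 B0 by (simp add: mult_nonneg_nonpos)
    have t4: "A' * D1 = \<epsilon> * (A' * B) - 2 * \<delta> * H0 * (A' * B)" unfolding eq1 by (simp add: algebra_simps)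
    have "0 \<le> - 2 * \<delta> * B"
      using L t1 t2 t3 t4 ab abd by (simp add: algebra_simps)
    thus False using mult_pos_pos[OF B0 d0] by (simp add: algebra_simps)
  qed
  have "f (s1,t1) \<le> 0" using gmax[of s1 t1] s1 S fp by auto
  hence "u (s1,t1) - v (s1,t1) \<le> \<epsilon> * ?H s1 - \<delta> * (?H s1)\<^sup>2" unfolding f_def by simp
  moreover have "\<delta> * (?H s1)\<^sup>2 \<ge> 0" using d0 by simp
  ultimately show ?thesis by linarith
qed


lemma le_main:
  assumes cer: "complete_end_of_revolution g1 g2" and z: "z > 0" and gz: "\<forall>s\<ge>0. g2 s \<ge> z"
    and hu: "harmonic_on_end g1 g2 u" and hv: "harmonic_on_end g1 g2 v"
    and bu: "bounded (u ` ({0..} \<times> UNIV))" and bv: "bounded (v ` ({0..} \<times> UNIV))"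
    and bd: "\<forall>t. u (0,t) = v (0,t)" and s1: "s1 \<ge> 0"
  shows "u (s1,t1) \<le> v (s1,t1)"
proof (rule ccontr)
  assume "\<not> u (s1,t1) \<le> v (s1,t1)"
  hence d: "u (s1,t1) - v (s1,t1) > 0" by simp
  obtain M where M: "M \<ge> 0" "\<forall>x\<in>{0..} \<times> UNIV. u x - v x \<le> M"
    using bounded_diff_bound[OF bu bv] by blast
  have H0: "Hf g1 g2 s1 \<ge> 0" using Hf_mono[OF cer order_refl s1] by (simp add: Hf_0)
  define \<epsilon> where "\<epsilon> = (u (s1,t1) - v (s1,t1)) / (2 * (Hf g1 g2 s1 + 1))"
  have e: "\<epsilon> > 0" using d H0 by (simp add: \<epsilon>_def)
  have "u (s1,t1) - v (s1,t1) \<le> \<epsilon> * Hf g1 g2 s1"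
    by (rule key[OF cer z gz hu hv M bd e s1])
  also have "\<dots> < \<epsilon> * (2 * (Hf g1 g2 s1 + 1))" using e H0 by (intro mult_strict_left_mono) auto
  also have "\<dots> = u (s1,t1) - v (s1,t1)" using H0 by (simp add: \<epsilon>_def)
  finally show False by simp
qed

theorem theoremC:
  fixes g1 g2 :: "real \<Rightarrow> real" and z :: real
  assumes "complete_end_of_revolution g1 g2"
    and "z > 0"
    and "\<forall>s\<ge>0. g2 s \<ge> z"
  shows "parabolic_end g1 g2"
  unfolding parabolic_end_def
proof (intro allI impI)
  fix u v :: "real \<times> real \<Rightarrow> real" and s t :: real
  assume h: "harmonic_on_end g1 g2 u \<and> bounded (u ` ({0..} \<times> UNIV)) \<and>
            harmonic_on_end g1 g2 v \<and> bounded (v ` ({0..} \<times> UNIV)) \<and> (\<forall>t. u (0,t) = v (0,t))"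
    and s: "0 \<le> s"
  have "u (s,t) \<le> v (s,t)" using le_main[OF assms, of u v s t] h s by blast
  moreover have "v (s,t) \<le> u (s,t)" using le_main[OF assms, of v u s t] h s by auto
  ultimately show "u (s,t) = v (s,t)" by simp
qed


end
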